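(* Let $\{S_i\}_{i\in\mathcal I}$ be a finite family of contracting similarities of $\mathbb{R}^d$, written $S_i(x)=c_iM_i(x)+b_i$ with $c_i\in(0,1)$, $M_i$ orthogonal and $b_i\in\mathbb{R}^d$, and let $T_i(x)=c_iM_i(x)$. Let $\gamma\ge0$ be defined by $\limsup_{k\to\infty}|\{T_I: I\in\mathcal I_k\}|^{1/k}=2^\gamma$. If $d=1$ or $d=2$, or if the matrices $M_i$ ($i\in\mathcal I$) commute, then $\gamma=0$.
   Context: $\mathcal I^*$ is the set of finite non-empty words over $\mathcal I$; for $I=(i_1,\dots,i_k)$, $T_I=T_{i_1}\circ\cdots\circ T_{i_k}$ and $c_I=c_{i_1}\cdots c_{i_k}$. For $k\ge0$, $\mathcal I_k=\{I\in\mathcal I^*: 2^{-k-1}<c_I\le2^{-k}\}$. *)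

theory Defs
  imports "HOL-Analysis.Analysis"
begin

definition word_map :: "('i \<Rightarrow> 'a \<Rightarrow> 'a) \<Rightarrow> 'i list \<Rightarrow> 'a \<Rightarrow> 'a" where
  "word_map T I = foldr (\<lambda>i f. T i \<circ> f) I id"

definition word_ratio :: "('i \<Rightarrow> real) \<Rightarrow> 'i list \<Rightarrow> real" where
  "word_ratio c I = prod_list (map c I)"

definition level_words :: "('i \<Rightarrow> real) \<Rightarrow> nat \<Rightarrow> 'i list set" where
  "level_words c k = {I. I \<noteq> [] \<and> 2 powr (- real k - 1) < word_ratio c I \<and> word_ratio c I \<le> 2 powr (- real k)}"

end

theory Submission
  imports Defs "HOL-Real_Asymp.Real_Asymp"
begin


definition mprod :: "('i \<Rightarrow> real^'n^'n) \<Rightarrow> 'i list \<Rightarrow> real^'n^'n" where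
  "mprod M I = foldr (\<lambda>i A. M i ** A) I (mat 1)"

lemma mprod_Nil[simp]: "mprod M [] = mat 1" by (simp add: mprod_def)
lemma mprod_Cons[simp]: "mprod M (i # I) = M i ** mprod M I" by (simp add: mprod_def)

lemma word_map_eq:
  "word_map (\<lambda>i x. c i *\<^sub>R (M i *v x)) I = (\<lambda>x. word_ratio c I *\<^sub>R (mprod M I *v x))"
  by (induction I) (auto simp: word_map_def word_ratio_def mprod_def matrix_vector_mult_scaleR matrix_vector_mul_assoc)

lemma mprod_append: "mprod M (I @ J) = mprod M I ** mprod M J"
  by (induction I) (auto simp: matrix_mul_assoc)

lemma mprod_orth: "(\<And>i. orthogonal_matrix (M i)) \<Longrightarrow> orthogonal_matrix (mprod M I)"
  by (induction I) (auto simp: mprod_def orthogonal_matrix_id orthogonal_matrix_mul)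

lemma ratio_mset: "mset I = mset J \<Longrightarrow> word_ratio c I = word_ratio c J"
  unfolding word_ratio_def by (metis mset_map prod_mset_prod_list)

lemma comm_mprod: assumes "\<And>i j. M i ** M j = M j ** M i"
  shows "M i ** mprod M J = mprod M J ** M i"
proof (induction J)
  case (Cons a J)
  have "M i ** mprod M (a # J) = (M i ** M a) ** mprod M J" by (simp add: matrix_mul_assoc)
  also have "\<dots> = M a ** (M i ** mprod M J)" by (simp add: assms matrix_mul_assoc)
  also have "\<dots> = mprod M (a # J) ** M i" by (simp add: Cons matrix_mul_assoc)
  finally show ?case .
qed simp

lemma mprod_mset: assumes "\<And>i j. M i ** M j = M j ** M i"
  shows "mset I = mset J \<Longrightarrow> mprod M I = mprod M J"
proof (induction I arbitrary: J)
  case Nil then show ?case by simp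
next
  case (Cons i I)
  then have "i \<in> set J" by (metis list.set_intros(1) set_mset_mset)
  then obtain J1 J2 where J: "J = J1 @ i # J2" by (meson split_list)
  have "mset I = mset (J1 @ J2)" using Cons.prems J by simp
  then have "mprod M I = mprod M (J1 @ J2)" using Cons.IH by blast
  then have "mprod M (i # I) = M i ** (mprod M J1 ** mprod M J2)"
    by (simp add: mprod_append)
  also have "\<dots> = mprod M J1 ** (M i ** mprod M J2)"
  proof -
    have "M i ** (mprod M J1 ** mprod M J2) = (M i ** mprod M J1) ** mprod M J2" by (simp add: matrix_mul_assoc)
    also have "\<dots> = (mprod M J1 ** M i) ** mprod M J2" by (subst comm_mprod[OF assms]) (rule refl)
    finally show ?thesis by (simp add: matrix_mul_assoc)
  qed
  also have "\<dots> = mprod M J" by (simp add: J mprod_append)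
  finally show ?case .
qed



lemma card_factor:
  assumes "finite (g ` W)" "\<And>x y. x \<in> W \<Longrightarrow> y \<in> W \<Longrightarrow> g x = g y \<Longrightarrow> h x = h y"
  shows "card (h ` W) \<le> card (g ` W)"
proof -
  have "h ` W = (\<lambda>v. h (SOME x. x \<in> W \<and> g x = v)) ` (g ` W)"
  proof (rule set_eqI, rule iffI)
    fix z assume "z \<in> h ` W"
    then obtain x where x: "x \<in> W" "z = h x" by auto
    have "\<exists>y. y \<in> W \<and> g y = g x" using x by auto
    then have "(SOME y. y \<in> W \<and> g y = g x) \<in> W \<and> g (SOME y. y \<in> W \<and> g y = g x) = g x"
      by (rule someI_ex)
    then have "h (SOME y. y \<in> W \<and> g y = g x) = h x" using assms(2) x by blast
    then show "z \<in> (\<lambda>v. h (SOME x. x \<in> W \<and> g x = v)) ` (g ` W)" using x by force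
  next
    fix z assume "z \<in> (\<lambda>v. h (SOME x. x \<in> W \<and> g x = v)) ` (g ` W)"
    then obtain x where x: "x \<in> W" "z = h (SOME y. y \<in> W \<and> g y = g x)" by auto
    have "\<exists>y. y \<in> W \<and> g y = g x" using x by auto
    then have "(SOME y. y \<in> W \<and> g y = g x) \<in> W"
      by (metis (mono_tags, lifting) someI_ex)
    then show "z \<in> h ` W" using x by auto
  qed
  then show ?thesis by (simp add: card_image_le assms(1))
qed

lemma limsup_poly:
  fixes f :: "nat \<Rightarrow> real"
  assumes "\<And>k. f k \<le> K * (real k + 1) ^ p" "\<And>k. 0 \<le> f k" "K > 0"
  shows "limsup (\<lambda>k. ereal (f k powr (1 / real k))) \<le> 1"
proof -
  have lim: "(\<lambda>k::nat. (K * (real k + 1) ^ p) powr (1 / real k)) \<longlonglongrightarrow> 1"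
  proof -
    have a: "(\<lambda>k::nat. 1 / real k) \<longlonglongrightarrow> 0" by real_asymp
    have b: "(\<lambda>k::nat. K powr (1 / real k)) \<longlonglongrightarrow> K powr 0"
      by (rule tendsto_powr[OF tendsto_const a]) (use assms(3) in auto)
    have c: "(\<lambda>k::nat. (real k + 1) powr (1 / real k)) \<longlonglongrightarrow> 1" by real_asymp
    have d: "(\<lambda>k::nat. K powr (1 / real k) * ((real k + 1) powr (1 / real k)) ^ p) \<longlonglongrightarrow> K powr 0 * 1 ^ p"
      by (intro tendsto_intros b c)
    have e: "(K * (real k + 1) ^ p) powr (1 / real k) = K powr (1 / real k) * ((real k + 1) powr (1 / real k)) ^ p" for k::nat
      using assms(3) by (simp add: powr_mult powr_powr powr_realpow[symmetric] mult.commute flip: powr_power)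
    show ?thesis using d assms(3) by (simp add: e)
  qed
  have "limsup (\<lambda>k. ereal (f k powr (1 / real k))) \<le> limsup (\<lambda>k. ereal ((K * (real k + 1) ^ p) powr (1 / real k)))"
    by (rule Limsup_mono) (auto intro!: always_eventually powr_mono2 assms)
  also have "\<dots> = 1"
  proof -
    have "(\<lambda>k. ereal ((K * (real k + 1) ^ p) powr (1 / real k))) \<longlonglongrightarrow> ereal 1"
      using lim by (rule tendsto_ereal)
    then show ?thesis by (simp add: lim_imp_Limsup one_ereal_def)
  qed
  finally show ?thesis .
qed



lemma ratio_le:
  assumes "\<And>i. 0 < c i" "\<And>i. c i \<le> cm"
  shows "word_ratio c I \<le> cm ^ length I \<and> 0 < word_ratio c I"
proof (induction I)
  case Nil then show ?case by (simp add: word_ratio_def)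
next
  case (Cons i I)
  then show ?case using assms[of i]
    by (auto simp: word_ratio_def intro!: mult_mono mult_pos_pos)
qed

lemma len_bound:
  fixes c :: "'i::finite \<Rightarrow> real"
  assumes "\<And>i. 0 < c i" "\<And>i. c i < 1"
  shows "\<exists>A>0. \<forall>k I. I \<in> level_words c k \<longrightarrow> real (length I) \<le> A * (real k + 1)"
proof -
  define cm where "cm = Max (range c)"
  have cm1: "cm < 1" unfolding cm_def using assms(2) by (simp add: Max_less_iff)
  have cmi: "c i \<le> cm" for i unfolding cm_def by simp
  have cm0: "0 < cm" using assms(1) cmi by (meson less_le_trans)
  define A where "A = ln 2 / (- ln cm)"
  have lncm: "ln cm < 0" using cm0 cm1 by simp
  have A0: "A > 0" unfolding A_def using lncm by (simp add: divide_pos_neg)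
  show ?thesis
  proof (intro exI conjI allI impI, fact A0)
    fix k I assume "I \<in> level_words c k"
    then have lt: "2 powr (- real k - 1) < word_ratio c I" by (simp add: level_words_def)
    have "word_ratio c I \<le> cm ^ length I" using ratio_le[of c cm I] assms(1) cmi by blast
    also have "\<dots> = cm powr real (length I)" using cm0 by (simp add: powr_realpow)
    finally have "2 powr (- real k - 1) < cm powr real (length I)" using lt by linarith
    then have l: "ln (2 powr (- real k - 1)) < ln (cm powr real (length I))"
      using cm0 by (subst ln_less_cancel_iff) auto
    have "ln (2 powr (- real k - 1)) = (- real k - 1) * ln 2" by (simp add: ln_powr)
    moreover have "ln (cm powr real (length I)) = real (length I) * ln cm" using cm0 by (simp add: ln_powr)
    ultimately have "(- real k - 1) * ln 2 < real (length I) * ln cm"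
      using l by simp
    then have "real (length I) * (- ln cm) < (real k + 1) * ln 2" by (simp add: algebra_simps)
    then have "real (length I) < (real k + 1) * ln 2 / (- ln cm)"
      using lncm by (subst pos_less_divide_eq) auto
    then show "real (length I) \<le> A * (real k + 1)" unfolding A_def by (simp add: field_simps)
  qed
qed



definition rotm :: "'n \<Rightarrow> 'n \<Rightarrow> real^'n^'n \<Rightarrow> bool" where
  "rotm u v A \<longleftrightarrow> A$v$v = A$u$u \<and> A$u$v = - A$v$u"
definition reflm :: "'n \<Rightarrow> 'n \<Rightarrow> real^'n^'n \<Rightarrow> bool" where
  "reflm u v A \<longleftrightarrow> A$v$v = - A$u$u \<and> A$u$v = A$v$u"
definition zc :: "'n \<Rightarrow> 'n \<Rightarrow> real^'n^'n \<Rightarrow> complex" where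
  "zc u v A = Complex (A$u$u) (A$v$u)"

context
  fixes u v :: "'n::finite"
  assumes uv: "u \<noteq> v" and UV: "(UNIV :: 'n set) = {u, v}"
begin

lemma sum_uv: "sum f (UNIV :: 'n set) = f u + f v"
  using uv by (simp add: UV)

lemma all_uv: "(\<forall>i::'n. P i) \<longleftrightarrow> P u \<and> P v"
  using UV by (metis insertCI insertE singletonD UNIV_I)

lemma mat_eq_uv: "(A :: real^'n^'n) = B \<longleftrightarrow>
   A$u$u = B$u$u \<and> A$u$v = B$u$v \<and> A$v$u = B$v$u \<and> A$v$v = B$v$v"
  by (auto simp: vec_eq_iff all_uv)

lemma mult_entry: "((A :: real^'n^'n) ** B)$i$j = A$i$u * B$u$j + A$i$v * B$v$j"
  by (simp add: matrix_matrix_mult_def sum_uv)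

lemma orth_entries:
  assumes "orthogonal_matrix (A :: real^'n^'n)"
  shows "(A$u$u)^2 + (A$v$u)^2 = 1" "(A$u$v)^2 + (A$v$v)^2 = 1" "A$u$u * A$u$v + A$v$u * A$v$v = 0"
        "(A$u$u)^2 + (A$u$v)^2 = 1" "(A$v$u)^2 + (A$v$v)^2 = 1" "A$u$u * A$v$u + A$u$v * A$v$v = 0"
proof -
  have 1: "transpose A ** A = mat 1" and 2: "A ** transpose A = mat 1"
    using assms by (auto simp: orthogonal_matrix_def)
  have e1: "(transpose A ** A)$i$j = (mat 1 :: real^'n^'n)$i$j" for i j using 1 by simp
  have e2: "(A ** transpose A)$i$j = (mat 1 :: real^'n^'n)$i$j" for i j using 2 by simp
  note e = e1[unfolded mult_entry] e2[unfolded mult_entry]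
  show "(A$u$u)^2 + (A$v$u)^2 = 1" using e(1)[of u u] by (simp add: transpose_def mat_def power2_eq_square)
  show "(A$u$v)^2 + (A$v$v)^2 = 1" using e(1)[of v v] by (simp add: transpose_def mat_def power2_eq_square)
  show "A$u$u * A$u$v + A$v$u * A$v$v = 0" using e(1)[of u v] uv by (simp add: transpose_def mat_def)
  show "(A$u$u)^2 + (A$u$v)^2 = 1" using e(2)[of u u] by (simp add: transpose_def mat_def power2_eq_square)
  show "(A$v$u)^2 + (A$v$v)^2 = 1" using e(2)[of v v] by (simp add: transpose_def mat_def power2_eq_square)
  show "A$u$u * A$v$u + A$u$v * A$v$v = 0" using e(2)[of u v] uv by (simp add: transpose_def mat_def)
qed

lemma orth_cases:
  assumes "orthogonal_matrix (A :: real^'n^'n)"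
  shows "(rotm u v A \<and> \<not> reflm u v A) \<or> (reflm u v A \<and> \<not> rotm u v A)"
proof -
  define a where "a = A$u$u"
  define b where "b = A$u$v"
  define c where "c = A$v$u"
  define d where "d = A$v$v"
  note o = orth_entries[OF assms, folded a_def b_def c_def d_def]
  have "(a*d - b*c)^2 = (a^2+b^2)*(c^2+d^2) - (a*c+b*d)^2" by (simp add: power2_eq_square algebra_simps)
  then have "(a*d - b*c)^2 = 1" using o by simp
  then have D: "a*d - b*c = 1 \<or> a*d - b*c = -1" by (simp add: power2_eq_1_iff)
  have S: "a^2+b^2+c^2+d^2 = 2" using o by simp
  have ne: "\<not> (a = 0 \<and> c = 0)" using o(1) by auto
  show ?thesis
  proof (cases "a*d - b*c = 1")
    case True
    then have "(a-d)^2 + (b+c)^2 = 0" using S by (simp add: power2_eq_square algebra_simps)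
    then have "a - d = 0 \<and> b + c = 0" by (simp add: sum_power2_eq_zero_iff)
    then show ?thesis using ne unfolding rotm_def reflm_def a_def b_def c_def d_def by auto
  next
    case False
    then have "a*d - b*c = -1" using D by simp
    then have "(a+d)^2 + (b-c)^2 = 0" using S by (simp add: power2_eq_square algebra_simps)
    then have "a + d = 0 \<and> b - c = 0" by (simp add: sum_power2_eq_zero_iff)
    then show ?thesis using ne unfolding rotm_def reflm_def a_def b_def c_def d_def by auto
  qed
qed

lemma zc_norm: "orthogonal_matrix A \<Longrightarrow> cmod (zc u v A) = 1"
  using orth_entries(1)[of A] by (simp add: zc_def cmod_def)

lemma rot_det: "rotm u v A \<Longrightarrow> rotm u v B \<Longrightarrow> zc u v A = zc u v B \<Longrightarrow> A = B"
  by (auto simp: rotm_def zc_def mat_eq_uv complex_eq_iff)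
lemma refl_det: "reflm u v A \<Longrightarrow> reflm u v B \<Longrightarrow> zc u v A = zc u v B \<Longrightarrow> A = B"
  by (auto simp: reflm_def zc_def mat_eq_uv complex_eq_iff)

lemma mult_rot_rot: "rotm u v A \<Longrightarrow> rotm u v B \<Longrightarrow>
   rotm u v (A ** B) \<and> zc u v (A ** B) = zc u v A * zc u v B"
  by (auto simp: rotm_def zc_def mult_entry complex_eq_iff algebra_simps)
lemma mult_rot_refl: "rotm u v A \<Longrightarrow> reflm u v B \<Longrightarrow>
   reflm u v (A ** B) \<and> zc u v (A ** B) = zc u v A * zc u v B"
  by (auto simp: rotm_def reflm_def zc_def mult_entry complex_eq_iff algebra_simps)
lemma mult_refl_rot: "reflm u v A \<Longrightarrow> rotm u v B \<Longrightarrow>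
   reflm u v (A ** B) \<and> zc u v (A ** B) = zc u v A * cnj (zc u v B)"
  by (auto simp: rotm_def reflm_def zc_def mult_entry complex_eq_iff algebra_simps)
lemma mult_refl_refl: "reflm u v A \<Longrightarrow> reflm u v B \<Longrightarrow>
   rotm u v (A ** B) \<and> zc u v (A ** B) = zc u v A * cnj (zc u v B)"
  by (auto simp: rotm_def reflm_def zc_def mult_entry complex_eq_iff algebra_simps)

lemma rot_id: "rotm u v (mat 1) \<and> zc u v (mat 1) = 1"
  using uv by (simp add: rotm_def zc_def mat_def complex_eq_iff)

end



fun sig2 :: "('i \<Rightarrow> bool) \<Rightarrow> 'i list \<Rightarrow> ('i \<Rightarrow> int) \<times> bool" where
  "sig2 r [] = ((\<lambda>_. 0), False)"
| "sig2 r (i # I) = ((\<lambda>j. (if j = i then 1 else 0) + (if r i then - fst (sig2 r I) j else fst (sig2 r I) j)),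
                      r i \<noteq> snd (sig2 r I))"

lemma sig2_bound: "\<bar>fst (sig2 r I) j\<bar> \<le> int (length I)"
  by (induction I) (auto simp: abs_if split: if_splits)

definition zw :: "('i::finite \<Rightarrow> complex) \<Rightarrow> ('i \<Rightarrow> int) \<Rightarrow> complex" where
  "zw z n = (\<Prod>j\<in>UNIV. z j powi n j)"

lemma zw_step:
  fixes z :: "'i::finite \<Rightarrow> complex"
  assumes nz: "\<And>j. cmod (z j) = 1"
  shows "zw z (\<lambda>j. (if j = i then 1 else 0) + (if s then - m j else m j))
       = z i * (if s then cnj (zw z m) else zw z m)"
proof -
  have z0: "z j \<noteq> 0" for j using nz[of j] by auto
  have cj: "cnj (z j) = inverse (z j)" for j
  proof -
    have "z j * cnj (z j) = 1" using complex_norm_square[of "z j"] nz[of j] by simp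
    then show ?thesis by (simp add: inverse_unique)
  qed
  have "zw z (\<lambda>j. (if j = i then 1 else 0) + (if s then - m j else m j))
      = (\<Prod>j\<in>UNIV. z j powi (if j = i then 1 else 0) * z j powi (if s then - m j else m j))"
    unfolding zw_def by (rule prod.cong) (auto simp: power_int_add z0)
  also have "\<dots> = (\<Prod>j\<in>UNIV. z j powi (if j = i then 1 else 0)) * (\<Prod>j\<in>UNIV. z j powi (if s then - m j else m j))"
    by (rule prod.distrib)
  also have "(\<Prod>j\<in>UNIV. z j powi (if j = i then 1 else 0)) = (\<Prod>j\<in>UNIV. if j = i then z j else 1)"
    by (rule prod.cong) auto
  also have "\<dots> = z i" by simp
  also have "(\<Prod>j\<in>UNIV. z j powi (if s then - m j else m j)) = (if s then cnj (zw z m) else zw z m)"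
  proof (cases s)
    case True
    have "cnj (zw z m) = (\<Prod>j\<in>UNIV. inverse (z j) powi m j)" by (simp add: zw_def cj)
    also have "\<dots> = (\<Prod>j\<in>UNIV. z j powi (- m j))" by (simp add: power_int_minus power_int_inverse)
    finally show ?thesis using True by simp
  qed (simp add: zw_def)
  finally show ?thesis .
qed

lemma sig2_inv:
  fixes M :: "'i::finite \<Rightarrow> real^'n::finite^'n"
  assumes uv: "u \<noteq> v" and UV: "(UNIV :: 'n set) = {u, v}"
    and orth: "\<And>i. orthogonal_matrix (M i)"
  shows "(if snd (sig2 (\<lambda>i. reflm u v (M i)) I) then reflm u v (mprod M I) else rotm u v (mprod M I))
     \<and> zc u v (mprod M I) = zw (\<lambda>j. zc u v (M j)) (fst (sig2 (\<lambda>i. reflm u v (M i)) I))"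
proof (induction I)
  case Nil then show ?case using rot_id[OF uv UV] by (simp add: zw_def)
next
  case (Cons i I)
  let ?r = "\<lambda>i. reflm u v (M i)"
  let ?z = "\<lambda>j. zc u v (M j)"
  have nz: "\<And>j. cmod (?z j) = 1" using zc_norm[OF uv UV orth] by blast
  have step: "zw ?z (fst (sig2 ?r (i # I))) = ?z i * (if ?r i then cnj (zw ?z (fst (sig2 ?r I))) else zw ?z (fst (sig2 ?r I)))"
    using zw_step[OF nz, where i=i and s="?r i" and m="fst (sig2 ?r I)"] by simp
  have ci: "(rotm u v (M i) \<and> \<not> ?r i) \<or> (?r i \<and> \<not> rotm u v (M i))" using orth_cases[OF uv UV orth] by blast
  show ?case
  proof (cases "snd (sig2 ?r I)")
    case True
    then have B: "reflm u v (mprod M I)" using Cons by simp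
    have Z: "zc u v (mprod M I) = zw ?z (fst (sig2 ?r I))" using Cons by simp
    from ci show ?thesis
    proof
      assume a: "rotm u v (M i) \<and> \<not> ?r i"
      have m: "rotm u v (M i)" using a by simp
      have ri: "\<not> ?r i" using a by simp
      note P = mult_rot_refl[OF uv UV m B]
      have sn: "snd (sig2 ?r (i # I)) = (?r i \<noteq> snd (sig2 ?r I))" by simp
      show ?thesis unfolding mprod_Cons using P ri step Z sn True by simp
    next
      assume a: "?r i \<and> \<not> rotm u v (M i)"
      have m: "reflm u v (M i)" using a by simp
      have ri: "?r i" using a by simp
      note P = mult_refl_refl[OF uv UV m B]
      have sn: "snd (sig2 ?r (i # I)) = (?r i \<noteq> snd (sig2 ?r I))" by simp
      show ?thesis unfolding mprod_Cons using P ri step Z sn True by simp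
    qed
  next
    case False
    then have B: "rotm u v (mprod M I)" using Cons by simp
    have Z: "zc u v (mprod M I) = zw ?z (fst (sig2 ?r I))" using Cons by simp
    from ci show ?thesis
    proof
      assume a: "rotm u v (M i) \<and> \<not> ?r i"
      have m: "rotm u v (M i)" using a by simp
      have ri: "\<not> ?r i" using a by simp
      note P = mult_rot_rot[OF uv UV m B]
      have sn: "snd (sig2 ?r (i # I)) = (?r i \<noteq> snd (sig2 ?r I))" by simp
      show ?thesis unfolding mprod_Cons using P ri step Z sn False by simp
    next
      assume a: "?r i \<and> \<not> rotm u v (M i)"
      have m: "reflm u v (M i)" using a by simp
      have ri: "?r i" using a by simp
      note P = mult_refl_rot[OF uv UV m B]
      have sn: "snd (sig2 ?r (i # I)) = (?r i \<noteq> snd (sig2 ?r I))" by simp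
      show ?thesis unfolding mprod_Cons using P ri step Z sn False by simp
    qed
  qed
qed

lemma sig2_det:
  fixes M :: "'i::finite \<Rightarrow> real^'n::finite^'n"
  assumes uv: "u \<noteq> v" and UV: "(UNIV :: 'n set) = {u, v}"
    and orth: "\<And>i. orthogonal_matrix (M i)"
    and eq: "sig2 (\<lambda>i. reflm u v (M i)) I = sig2 (\<lambda>i. reflm u v (M i)) J"
  shows "mprod M I = mprod M J"
proof -
  note a = sig2_inv[OF uv UV orth, where I=I] and b = sig2_inv[OF uv UV orth, where I=J]
  show ?thesis
  proof (cases "snd (sig2 (\<lambda>i. reflm u v (M i)) I)")
    case True
    then show ?thesis using a b eq refl_det[OF uv UV] by simp
  next
    case False
    then show ?thesis using a b eq rot_det[OF uv UV] by simp
  qed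
qed


lemma card1_comm:
  assumes "CARD('n::finite) = 1"
  shows "(A :: real^'n^'n) ** B = B ** A"
proof -
  obtain u :: 'n where U: "(UNIV :: 'n set) = {u}" using assms card_1_singletonE by blast
  have all: "\<And>i::'n. i = u" using U by auto
  show ?thesis by (simp add: vec_eq_iff matrix_matrix_mult_def U) (metis all mult.commute)
qed

lemma arith1: "(L + 1) ^ m \<le> 2 * (2 * L + 2) ^ (2 * m :: nat)" for L :: nat
proof -
  have "(L + 1) ^ m \<le> (2 * L + 2) ^ m" by (rule power_mono) auto
  also have "\<dots> \<le> (2 * L + 2) ^ (2 * m)" by (rule power_increasing) auto
  finally show ?thesis by simp
qed

lemma arith2: "(L + 1) ^ m * ((2 * L + 1) ^ m * 2) \<le> 2 * (2 * L + 2) ^ (2 * m :: nat)" for L :: nat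
proof -
  have "(L + 1) ^ m \<le> (2 * L + 2) ^ m" by (rule power_mono) auto
  moreover have "(2 * L + 1) ^ m \<le> (2 * L + 2) ^ m" by (rule power_mono) auto
  ultimately have "(L + 1) ^ m * (2 * L + 1) ^ m \<le> (2 * L + 2) ^ m * (2 * L + 2) ^ m" by (rule mult_le_mono)
  then show ?thesis by (simp add: power_add[symmetric] mult_2)
qed

theorem lemma4p4:
  fixes c :: "'i::finite \<Rightarrow> real"
    and M :: "'i \<Rightarrow> real^'n^'n"
    and b :: "'i \<Rightarrow> real^'n"
    and \<gamma> :: real
  assumes c_pos: "\<And>i. 0 < c i" and c_lt1: "\<And>i. c i < 1"
    and M_orth: "\<And>i. orthogonal_matrix (M i)"
    and gamma_nonneg: "\<gamma> \<ge> 0"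
    and gamma_def: "limsup (\<lambda>k::nat. ereal (real (card
          ((\<lambda>I. word_map (\<lambda>i x. c i *\<^sub>R (M i *v x)) I) ` level_words c k)) powr (1 / real k)))
        = ereal (2 powr \<gamma>)"
    and cases: "CARD('n) = 1 \<or> CARD('n) = 2 \<or> (\<forall>i j. M i ** M j = M j ** M i)"
  shows "\<gamma> = 0"
proof -
  define h where "h = (\<lambda>I. word_map (\<lambda>i x. c i *\<^sub>R (M i *v x)) I)"
  define W where "W = level_words c"
  define m where "m = CARD('i)"
  obtain A where A0: "A > 0" and lenb: "\<And>k I. I \<in> W k \<Longrightarrow> real (length I) \<le> A * (real k + 1)"
    using len_bound[where c=c, OF c_pos c_lt1] unfolding W_def by blast
  define L where "L k = nat \<lfloor>A * (real k + 1)\<rfloor>" for k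
  have lenL: "length I \<le> L k" if "I \<in> W k" for I k
  proof -
    have "real (length I) \<le> A * (real k + 1)" using lenb[OF that] .
    then have "int (length I) \<le> \<lfloor>A * (real k + 1)\<rfloor>" by (simp add: le_floor_iff)
    then show ?thesis unfolding L_def by linarith
  qed
  define cnt where "cnt I = (\<lambda>i. count (mset I) i)" for I :: "'i list"
  have cnt_in: "cnt I \<in> (\<Pi>\<^sub>E i\<in>UNIV. {0..N})" if "length I \<le> N" for I N
  proof -
    have "count (mset I) i \<le> N" for i
      using that count_le_length[of I i] by (simp add: count_mset)
    then show ?thesis by (simp add: cnt_def PiE_iff)
  qed
  have cnt_mset: "cnt I = cnt J \<Longrightarrow> mset I = mset J" for I J
  proof -
    assume "cnt I = cnt J"
    then have "\<And>i. count (mset I) i = count (mset J) i" unfolding cnt_def by simp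
    then show "mset I = mset J" by (rule multiset_eqI)
  qed
  have h_eq: "h I = (\<lambda>x. word_ratio c I *\<^sub>R (mprod M I *v x))" for I
    unfolding h_def by (rule word_map_eq)
  have main: "card (h ` W k) \<le> 2 * (2 * L k + 2) ^ (2 * m)" for k
  proof -
    have comm_case: ?thesis if comm: "\<And>i j. M i ** M j = M j ** M i"
    proof -
      have sub: "cnt ` W k \<subseteq> (\<Pi>\<^sub>E i\<in>UNIV. {0..L k})" using cnt_in lenL by blast
      have fin: "finite (cnt ` W k)" by (rule finite_subset[OF sub]) (simp add: finite_PiE)
      have "card (h ` W k) \<le> card (cnt ` W k)"
      proof (rule card_factor[OF fin])
        fix x y assume "cnt x = cnt y"
        then have "mset x = mset y" by (rule cnt_mset)
        then have "mprod M x = mprod M y" "word_ratio c x = word_ratio c y"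
          by (rule mprod_mset[OF comm], rule ratio_mset)
        then show "h x = h y" by (simp add: h_eq)
      qed
      also have "\<dots> \<le> card (\<Pi>\<^sub>E i\<in>(UNIV::'i set). {0..L k})" by (rule card_mono[OF _ sub]) (simp add: finite_PiE)
      also have "\<dots> = (L k + 1) ^ m" by (simp add: card_PiE m_def)
      also have "\<dots> \<le> 2 * (2 * L k + 2) ^ (2 * m)" by (rule arith1)
      finally show ?thesis .
    qed
    show ?thesis
    proof (cases "CARD('n) = 2")
      case True
      then obtain u v :: 'n where uv: "u \<noteq> v" and UV: "(UNIV :: 'n set) = {u, v}"
        by (metis card_2_iff)
      define r where "r i = reflm u v (M i)" for i
      define \<sigma> where "\<sigma> I = (cnt I, sig2 r I)" for I
      define S where "S = (\<Pi>\<^sub>E i\<in>(UNIV::'i set). {0..L k}) \<times> ((\<Pi>\<^sub>E i\<in>(UNIV::'i set). {- int (L k)..int (L k)}) \<times> (UNIV :: bool set))"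
      have sub: "\<sigma> ` W k \<subseteq> S"
      proof
        fix z assume "z \<in> \<sigma> ` W k"
        then obtain I where I: "I \<in> W k" "z = \<sigma> I" by auto
        have l: "length I \<le> L k" using lenL[OF I(1)] .
        have "cnt I \<in> (\<Pi>\<^sub>E i\<in>UNIV. {0..L k})" using cnt_in[OF l] .
        moreover have "fst (sig2 r I) \<in> (\<Pi>\<^sub>E i\<in>(UNIV::'i set). {- int (L k)..int (L k)})"
        proof -
          have "- int (L k) \<le> fst (sig2 r I) j \<and> fst (sig2 r I) j \<le> int (L k)" for j
            using sig2_bound[of r I j] l by linarith
          then show ?thesis by (simp add: PiE_iff)
        qed
        ultimately show "z \<in> S" unfolding S_def I(2) \<sigma>_def by (cases "sig2 r I") auto
      qed
      have finS: "finite S" unfolding S_def by (simp add: finite_PiE)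
      have fin: "finite (\<sigma> ` W k)" by (rule finite_subset[OF sub finS])
      have "card (h ` W k) \<le> card (\<sigma> ` W k)"
      proof (rule card_factor[OF fin])
        fix x y assume "\<sigma> x = \<sigma> y"
        then have e1: "cnt x = cnt y" and e2: "sig2 r x = sig2 r y" by (auto simp: \<sigma>_def)
        have "mset x = mset y" using e1 by (rule cnt_mset)
        then have "word_ratio c x = word_ratio c y" by (rule ratio_mset)
        moreover have "mprod M x = mprod M y"
          using sig2_det[where M=M, OF uv UV M_orth] e2 unfolding r_def by blast
        ultimately show "h x = h y" by (simp add: h_eq)
      qed
      also have "\<dots> \<le> card S" by (rule card_mono[OF finS sub])
      also have "\<dots> = (L k + 1) ^ m * ((2 * L k + 1) ^ m * 2)"
      proof -
        have "nat (2 * int (L k) + 1) = Suc (2 * L k)" by (simp add: nat_eq_iff)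
        then show ?thesis unfolding S_def by (simp add: card_cartesian_product card_PiE m_def)
      qed
      also have "\<dots> \<le> 2 * (2 * L k + 2) ^ (2 * m)" by (rule arith2)
      finally show ?thesis .
    next
      case False
      then have "CARD('n) = 1 \<or> (\<forall>i j. M i ** M j = M j ** M i)" using cases by blast
      then have "\<And>i j. M i ** M j = M j ** M i" using card1_comm by blast
      then show ?thesis by (rule comm_case)
    qed
  qed
  define K where "K = 2 * (2 * (A + 1)) ^ (2 * m)"
  have K0: "K > 0" unfolding K_def using A0 by simp
  have bound: "real (card (h ` W k)) \<le> K * (real k + 1) ^ (2 * m)" for k
  proof -
    have nn: "0 \<le> A * (real k + 1)" using A0 by simp
    then have "real (L k) = real_of_int \<lfloor>A * (real k + 1)\<rfloor>" unfolding L_def by (simp add: of_nat_nat)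
    also have "\<dots> \<le> A * (real k + 1)" by (rule of_int_floor_le)
    finally have "real (L k) \<le> A * (real k + 1)" .
    then have "2 * real (L k) + 2 \<le> 2 * (A + 1) * (real k + 1)" using A0
      by (simp add: algebra_simps)
    then have "(2 * real (L k) + 2) ^ (2 * m) \<le> (2 * (A + 1) * (real k + 1)) ^ (2 * m)"
      by (rule power_mono) simp
    moreover have "real (card (h ` W k)) \<le> 2 * (2 * real (L k) + 2) ^ (2 * m)"
    proof -
      have "real (card (h ` W k)) \<le> real (2 * (2 * L k + 2) ^ (2 * m))" using main[of k] by (simp only: of_nat_le_iff)
      then show ?thesis by (simp add: add.commute)
    qed
    ultimately show ?thesis unfolding K_def by (simp add: power_mult_distrib)
  qed
  have "limsup (\<lambda>k. ereal (real (card (h ` W k)) powr (1 / real k))) \<le> 1"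
    by (rule limsup_poly[OF bound _ K0]) simp
  then have "ereal (2 powr \<gamma>) \<le> 1" using gamma_def unfolding h_def W_def by simp
  then have le: "2 powr \<gamma> \<le> 1" by simp
  show ?thesis
  proof (rule ccontr)
    assume "\<gamma> \<noteq> 0"
    then have "\<gamma> > 0" using gamma_nonneg by simp
    then have "2 powr 0 < 2 powr \<gamma>" by (intro powr_less_mono) auto
    then show False using le by simp
  qed
qed

end
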